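(* Consider the disturbance-free discrete-time system $$x(t+1)=A\,Z(x(t))+B\,u(t),\qquad Z(x)=\begin{bmatrix}x\\ S(x)\end{bmatrix}\in\mathbb{R}^{n+N},$$ with unknown $A=[A_1\ \ A_2]$ ($A_1\in\mathbb{R}^{n\times n}$, $A_2\in\mathbb{R}^{n\times N}$), unknown $B\in\mathbb{R}^{n\times m}$, and known $S:\mathbb{R}^n\to\mathbb{R}^N$ differentiable with $S(0)=0$. Let $A_s=\frac{\partial S}{\partial x}(0)$, $Q(x)=S(x)-A_sx$, $\bar A_1=A_1+A_2A_s$, and assume $(\bar A_1,B)$ is stabilizable and $Q$ is Lipschitz on the safe set $\mathcal{S}(F,g)=\{x\in\mathbb{R}^n: Fx\le g\}$, where $F\in\mathbb{R}^{s\times n}$, $g\in\mathbb{R}^s$ and $\mathcal{S}(F,g)$ is a polyhedral C-set. Let data $U_0,X_0,X_1,V_0$ be collected from this system (with no disturbance), with $V_0$ of full row rank and $T\ge n+N+1$. Let $\lambda\in(0,1]$. Suppose there exist $G_K=[G_{K,1}\ \ G_{K,2}]\in\mathbb{R}^{T\times(n+N)}$ and $P_s\in\mathbb{R}^{s\times s}$ such that $$P_sg\le\lambda g-l^d,\qquad P_sF=FX_1G_{K,1},\qquad V_0G_K=I,\qquad P_s\ge 0,$$ where $l^d=[l^d_1,\dots,l^d_s]^T$ with $$l^d_i=\min_{G_{K,2}}\ \max_{x:\,Fx\le g}\ F_iX_1G_{K,2}\,Q(x),\quad i=1,\dots,s,$$ and where the matrix $G_{K,2}$ in $G_K$ attains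 each of these minima, i.e. $\max_{x:\,Fx\le g}F_iX_1G_{K,2}Q(x)=l^d_i$ for all $i$. Then, with $K_1=U_0G_{K,1}$ and $K_2=U_0G_{K,2}$, the safe set $\mathcal{S}(F,g)$ is $\lambda$-contractive (and hence robustly invariant) for the closed-loop system under the controller $u(t)=K_1x(t)+K_2Q(x(t))$.
   Context: Data: inputs $u(0),\dots,u(T-1)$ are applied to the system and states $x(0),\dots,x(T)$ recorded; $U_0=[u(0)\cdots u(T-1)]\in\mathbb{R}^{m\times T}$, $X_0=[x(0)\cdots x(T-1)]\in\mathbb{R}^{n\times T}$, $X_1=[x(1)\cdots x(T)]\in\mathbb{R}^{n\times T}$, $V_0=\begin{bmatrix}X_0\\ Q(X_0)\end{bmatrix}\in\mathbb{R}^{(n+N)\times T}$ with $Q(X_0)=[Q(x(0))\cdots Q(x(T-1))]$. $G_{K,1}\in\mathbb{R}^{T\times n}$, $G_{K,2}\in\mathbb{R}^{T\times N}$. $F_i$ denotes the $i$-th row of $F$. Vector/matrix inequalities are elementwise; $P_s\ge0$ means all entries of $P_s$ are nonnegative. A polyhedral C-set is a compact convex polyhedron containing the origin in its interior. For $\lambda\in(0,1]$, a set $\mathcal{P}=\{x:Fx\le g\}$ is $\lambda$-contractive for the closed-loop system if $x(t)\in\mathcal{P}$ implies $x(t+1)\in\lambda\mathcal{P}=\{x:Fx\le\lambda g\}$ for all $t$ (and all admissible disturbances); it is robustly invariant if $x(0)\in\mathcal{P}$ implies $x(t)\in\mathcal{P}$ for all $t\ge0$. *)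

theory Defs
  imports "HOL-Analysis.Analysis"
begin

definition safe_set :: "real^'n^'s \<Rightarrow> real^'s \<Rightarrow> (real^'n) set" where
  "safe_set F g = {x. F *v x \<le> g}"

definition polyhedral_C_set :: "(real^'n) set \<Rightarrow> bool" where
  "polyhedral_C_set P \<longleftrightarrow> polyhedron P \<and> convex P \<and> compact P \<and> 0 \<in> interior P"

definition cmat :: "real^'n^'m \<Rightarrow> complex^'n^'m" where
  "cmat M = (\<chi> i j. complex_of_real (M $ i $ j))"

definition schur_stable :: "real^'n^'n \<Rightarrow> bool" where
  "schur_stable M \<longleftrightarrow>
     (\<forall>(\<mu>::complex) (v::complex^'n). v \<noteq> 0 \<and> cmat M *v v = \<mu> *s v \<longrightarrow> cmod \<mu> < 1)"

definition stabilizable :: "real^'n^'n \<Rightarrow> real^'m^'n \<Rightarrow> bool" where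
  "stabilizable A B \<longleftrightarrow> (\<exists>K::real^'n^'m. schur_stable (A + B ** K))"

definition hcat :: "real^'a^'r \<Rightarrow> real^'b^'r \<Rightarrow> real^('a + 'b)^'r" where
  "hcat M1 M2 = (\<chi> r c. case c of Inl i \<Rightarrow> M1 $ r $ i | Inr k \<Rightarrow> M2 $ r $ k)"

definition vcat :: "real^'c^'a \<Rightarrow> real^'c^'b \<Rightarrow> real^'c^('a + 'b)" where
  "vcat M1 M2 = (\<chi> r. case r of Inl i \<Rightarrow> M1 $ i | Inr k \<Rightarrow> M2 $ k)"

definition lambda_contractive :: "real \<Rightarrow> real^'n^'s \<Rightarrow> real^'s \<Rightarrow> (real^'n \<Rightarrow> real^'n) \<Rightarrow> bool" where
  "lambda_contractive lam F g f \<longleftrightarrow>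
     (\<forall>xs::nat \<Rightarrow> real^'n. (\<forall>t. xs (Suc t) = f (xs t)) \<longrightarrow>
        (\<forall>t. xs t \<in> safe_set F g \<longrightarrow> xs (Suc t) \<in> safe_set F (lam *\<^sub>R g)))"

text \<open>Robust invariance (no disturbances here): trajectories starting in P stay in P.\<close>
definition robustly_invariant :: "(real^'n) set \<Rightarrow> (real^'n \<Rightarrow> real^'n) \<Rightarrow> bool" where
  "robustly_invariant P f \<longleftrightarrow>
     (\<forall>xs::nat \<Rightarrow> real^'n. xs 0 \<in> P \<and> (\<forall>t. xs (Suc t) = f (xs t)) \<longrightarrow> (\<forall>t. xs t \<in> P))"

end

theory Submission
  imports Defs
begin


lemma mm_add_rdistrib: "((A::real^'n^'m) + B) ** (C::real^'p^'n) = A ** C + B ** C"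
  by (vector matrix_matrix_mult_def sum.distrib[symmetric] field_simps)

lemma mm_entry_col: "((M::real^'n^'m) ** (N::real^'p^'n)) $ i $ j = (M *v (\<chi> k. N $ k $ j)) $ i"
  by (simp add: matrix_matrix_mult_def matrix_vector_mult_def)

theorem theorem1:
  fixes A1 :: "real^'n^'n" and A2 :: "real^'N^'n" and B :: "real^'m^'n"
    and S :: "real^'n \<Rightarrow> real^'N" and As :: "real^'n^'N"
    and F :: "real^'n^'s" and g :: "real^'s"
    and x :: "nat \<Rightarrow> real^'n" and u :: "nat \<Rightarrow> real^'m"
    and tau :: "'T::finite \<Rightarrow> nat"
    and lam :: real
    and GK1 :: "real^'n^'T" and GK2 :: "real^'N^'T" and Ps :: "real^'s^'s" and ld :: "real^'s"
    and Q :: "real^'n \<Rightarrow> real^'N"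
    and U0 :: "real^'T^'m" and X0 X1 :: "real^'T^'n" and V0 :: "real^'T^('n + 'N)"
    and GK :: "real^('n + 'N)^'T" and K1 :: "real^'n^'m" and K2 :: "real^'N^'m"
  assumes Q_def: "Q = (\<lambda>z. S z - As *v z)"
    and U0_def: "U0 = (\<chi> i j. u (tau j) $ i)"
    and X0_def: "X0 = (\<chi> i j. x (tau j) $ i)"
    and X1_def: "X1 = (\<chi> i j. x (Suc (tau j)) $ i)"
    and V0_def: "V0 = vcat X0 (\<chi> k j. Q (x (tau j)) $ k)"
    and GK_def: "GK = hcat GK1 GK2"
    and K1_def: "K1 = U0 ** GK1"
    and K2_def: "K2 = U0 ** GK2"
    and S_diff: "\<forall>z. S differentiable (at z)"
    and S0: "S 0 = 0"
    and As_jac: "(S has_derivative (\<lambda>z. As *v z)) (at 0)"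
    and stab: "stabilizable (A1 + A2 ** As) B"
    and Q_lip: "\<exists>L. L-lipschitz_on (safe_set F g) Q"
    and Cset: "polyhedral_C_set (safe_set F g)"
    and tau_enum: "bij_betw tau UNIV {..<CARD('T)}"
    and data: "\<forall>t < CARD('T). x (Suc t) = A1 *v x t + A2 *v S (x t) + B *v u t"
    and V0_rank: "rank V0 = CARD('n + 'N)"
    and T_ge: "CARD('T) \<ge> CARD('n) + CARD('N) + 1"
    and lam_pos: "0 < lam" and lam_le: "lam \<le> 1"
    and ld_def: "\<forall>i. ld $ i = (SUP z\<in>safe_set F g. (F ** X1 ** GK2 *v Q z) $ i)"
    and ld_min: "\<forall>i (G2::real^'N^'T).
        (SUP z\<in>safe_set F g. (F ** X1 ** GK2 *v Q z) $ i)
          \<le> (SUP z\<in>safe_set F g. (F ** X1 ** G2 *v Q z) $ i)"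
    and c1: "Ps *v g \<le> lam *\<^sub>R g - ld"
    and c2: "Ps ** F = F ** X1 ** GK1"
    and c3: "V0 ** GK = mat 1"
    and c4: "\<forall>i j. 0 \<le> Ps $ i $ j"
  shows "lambda_contractive lam F g (\<lambda>z. A1 *v z + A2 *v S z + B *v (K1 *v z + K2 *v Q z))
    \<and> robustly_invariant (safe_set F g) (\<lambda>z. A1 *v z + A2 *v S z + B *v (K1 *v z + K2 *v Q z))"
proof -
  define QX0 :: "real^'T^'N" where "QX0 = (\<chi> k j. Q (x (tau j)) $ k)"
  define Ab where "Ab = A1 + A2 ** As"
  have SQ: "\<And>z. S z = Q z + As *v z" using Q_def by simp
  have X1eq: "X1 = Ab ** X0 + A2 ** QX0 + B ** U0"
  proof -
    have "X1 $ i $ j = (Ab ** X0 + A2 ** QX0 + B ** U0) $ i $ j" for i j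
    proof -
      have tj: "tau j < CARD('T)" using tau_enum by (auto simp: bij_betw_def)
      have c0: "(\<chi> k. X0 $ k $ j) = x (tau j)" by (simp add: X0_def vec_eq_iff)
      have c1: "(\<chi> k. QX0 $ k $ j) = Q (x (tau j))" by (simp add: QX0_def vec_eq_iff)
      have c2: "(\<chi> k. U0 $ k $ j) = u (tau j)" by (simp add: U0_def vec_eq_iff)
      have "X1 $ i $ j = (A1 *v x (tau j) + A2 *v S (x (tau j)) + B *v u (tau j)) $ i"
        using data tj by (simp add: X1_def)
      also have "\<dots> = (Ab *v x (tau j) + A2 *v Q (x (tau j)) + B *v u (tau j)) $ i"
        by (simp add: SQ Ab_def matrix_vector_mult_add_rdistrib matrix_vector_right_distrib
              matrix_vector_mul_assoc algebra_simps)
      finally show ?thesis by (simp add: mm_entry_col c0 c1 c2)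
    qed
    then show ?thesis by (simp add: vec_eq_iff)
  qed
  have b1: "X0 ** GK1 = mat 1" and b2: "QX0 ** GK1 = 0" and b3: "X0 ** GK2 = 0" and b4: "QX0 ** GK2 = mat 1"
  proof -
    have e: "\<And>a b. (V0 ** GK) $ a $ b = (mat 1 :: real^('n+'N)^('n+'N)) $ a $ b" using c3 by simp
    show "X0 ** GK1 = mat 1"
      using e[of "Inl _" "Inl _"]
      by (simp add: vec_eq_iff matrix_matrix_mult_def V0_def GK_def vcat_def hcat_def mat_def)
    show "QX0 ** GK1 = 0"
      using e[of "Inr _" "Inl _"]
      by (simp add: vec_eq_iff matrix_matrix_mult_def V0_def GK_def vcat_def hcat_def mat_def QX0_def)
    show "X0 ** GK2 = 0"
      using e[of "Inl _" "Inr _"]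
      by (simp add: vec_eq_iff matrix_matrix_mult_def V0_def GK_def vcat_def hcat_def mat_def)
    show "QX0 ** GK2 = mat 1"
      using e[of "Inr _" "Inr _"]
      by (simp add: vec_eq_iff matrix_matrix_mult_def V0_def GK_def vcat_def hcat_def mat_def QX0_def)
  qed
  have M1: "X1 ** GK1 = Ab + B ** K1"
    by (simp add: X1eq mm_add_rdistrib matrix_mul_assoc[symmetric] b1 b2 K1_def)
  have M2: "X1 ** GK2 = A2 + B ** K2"
    by (simp add: X1eq mm_add_rdistrib matrix_mul_assoc[symmetric] b3 b4 K2_def)
  define f where "f = (\<lambda>z. A1 *v z + A2 *v S z + B *v (K1 *v z + K2 *v Q z))"
  have fz: "f z = (X1 ** GK1) *v z + (X1 ** GK2) *v Q z" for z
    by (simp add: f_def M1 M2 Ab_def SQ matrix_vector_mult_add_rdistrib matrix_vector_right_distrib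
              matrix_vector_mul_assoc[symmetric] algebra_simps)
  have cpt: "compact (safe_set F g)" using Cset by (simp add: polyhedral_C_set_def)
  have zin: "0 \<in> safe_set F g" using Cset interior_subset by (auto simp: polyhedral_C_set_def)
  hence g0: "\<And>i. 0 \<le> g $ i" by (simp add: safe_set_def less_eq_vec_def)
  obtain L where L: "L-lipschitz_on (safe_set F g) Q" using Q_lip by blast
  have Qc: "continuous_on (safe_set F g) Q" by (rule lipschitz_on_continuous_on[OF L])
  have bdd: "bdd_above ((\<lambda>z. (F ** X1 ** GK2 *v Q z) $ i) ` safe_set F g)" for i
  proof -
    have "continuous_on (safe_set F g) (\<lambda>z. (F ** X1 ** GK2 *v Q z) $ i)"
    proof -
      have l: "continuous_on UNIV ((*v) (F ** X1 ** GK2))"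
        by (intro linear_continuous_on matrix_vector_mul_bounded_linear)
      have "continuous_on (safe_set F g) (\<lambda>z. (F ** X1 ** GK2) *v Q z)"
        using continuous_on_compose2[OF l Qc] by simp
      thus ?thesis by (intro continuous_intros)
    qed
    hence "compact ((\<lambda>z. (F ** X1 ** GK2 *v Q z) $ i) ` safe_set F g)"
      using compact_continuous_image cpt by blast
    thus ?thesis by (intro bounded_imp_bdd_above compact_imp_bounded)
  qed
  have step: "F *v f z \<le> lam *\<^sub>R g" if z: "z \<in> safe_set F g" for z
  proof -
    have Fz: "F *v z \<le> g" using z by (simp add: safe_set_def)
    have "F *v f z = Ps *v (F *v z) + (F ** X1 ** GK2) *v Q z"
      by (simp add: fz matrix_vector_right_distrib matrix_vector_mul_assoc c2 matrix_mul_assoc)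
    moreover have "Ps *v (F *v z) \<le> Ps *v g"
      using Fz c4 unfolding less_eq_vec_def matrix_vector_mult_def
      by (auto intro!: sum_mono mult_left_mono)
    moreover have "(F ** X1 ** GK2) *v Q z \<le> ld"
      unfolding less_eq_vec_def using ld_def cSUP_upper[OF z bdd] by simp
    ultimately show ?thesis using c1 by (simp add: less_eq_vec_def) (smt (verit))
  qed
  have lc: "lambda_contractive lam F g f"
    unfolding lambda_contractive_def safe_set_def using step by (simp add: safe_set_def)
  have inv: "z \<in> safe_set F g \<Longrightarrow> f z \<in> safe_set F g" for z
  proof -
    assume "z \<in> safe_set F g"
    hence "F *v f z \<le> lam *\<^sub>R g" by (rule step)
    moreover have "lam *\<^sub>R g \<le> g" using g0 lam_le
      by (simp add: less_eq_vec_def mult_left_le_one_le lam_pos less_imp_le)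
    ultimately show ?thesis by (simp add: safe_set_def order_trans)
  qed
  have ri: "robustly_invariant (safe_set F g) f"
    unfolding robustly_invariant_def
  proof (intro allI impI)
    fix xs :: "nat \<Rightarrow> real^'n" and t
    assume h: "xs 0 \<in> safe_set F g \<and> (\<forall>t. xs (Suc t) = f (xs t))"
    show "xs t \<in> safe_set F g" by (induction t) (use h inv in auto)
  qed
  show ?thesis using lc ri by (simp add: f_def)
qed

end
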